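(* Assume that the distribution of $Z$ is aperiodic (the greatest common divisor of its support is $1$), that $\mathbb{E} Z=\infty$ and that $\mathbb{E}\min(Z,W)<\infty$. Then $\mathbb{E}[J_n]\to\infty$ as $n\to\infty$.
   Context: Let $Z,W,(Z_n)_{n\ge1},(W_n)_{n\ge1}$ be independent, identically distributed random variables taking values in $\mathbb{N}=\{1,2,3,\dots\}$. Define the shortest-edge chain $S_n=\{n\}$ for $n\le 0$ and $S_n=\{n\}\cup S_{n-\min(Z_n,W_n)}$ for $n\ge1$. For $n\ge1$ let $J_n=\sum_{m=1}^n \mathbb{1}_{\{m\in S_n\}}\mathbb{1}_{\{\max(Z_m,W_m)\ge m\}}$ (the number of vertices of $S_n$ with positive index whose longer outgoing edge reaches a non-positive integer). *)

theory Defs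
  imports "HOL-Probability.Probability"
begin

text \<open>Shortest-edge chain for a fixed realisation z, w of the sequences (Z_n), (W_n):
  S_n = {n} for n \<le> 0 and S_n = {n} \<union> S_(n - min(z n, w n)) for n \<ge> 1.
  The extra guard (min = 0) only serves to make the recursion total; it never
  applies when the values are in {1,2,...}.\<close>

function shortest_chain :: "(nat \<Rightarrow> nat) \<Rightarrow> (nat \<Rightarrow> nat) \<Rightarrow> int \<Rightarrow> int set" where
  "shortest_chain z w n =
     (if n \<le> 0 \<or> min (z (nat n)) (w (nat n)) = 0 then {n}
      else insert n (shortest_chain z w (n - int (min (z (nat n)) (w (nat n))))))"
  by auto
termination by (relation "Wellfounded.measure (\<lambda>(z, w, n). nat n)") auto

definition J_count :: "(nat \<Rightarrow> nat) \<Rightarrow> (nat \<Rightarrow> nat) \<Rightarrow> nat \<Rightarrow> nat" where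
  "J_count z w n =
     (\<Sum>m = 1..n. (if int m \<in> shortest_chain z w (int n) then 1 else 0)
                  * (if max (z m) (w m) \<ge> m then 1 else 0))"

end

theory Submission imports Defs begin
declare shortest_chain.simps[simp del]

lemma sc_self: "n \<in> shortest_chain z w n"
  by (subst shortest_chain.simps) auto

lemma sc_le: "x \<in> shortest_chain z w n \<Longrightarrow> x \<le> n"
proof (induction z w n rule: shortest_chain.induct)
  case (1 z w n)
  show ?case using 1(2) 1(1) by (subst (asm) shortest_chain.simps) (auto split: if_splits)
qed

lemma sc_local:
  "(\<And>k. y < int k \<Longrightarrow> int k \<le> n \<Longrightarrow> z k = z' k \<and> w k = w' k)
   \<Longrightarrow> (y \<in> shortest_chain z w n \<longleftrightarrow> y \<in> shortest_chain z' w' n)"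
proof (induction z w n rule: shortest_chain.induct)
  case (1 z w n)
  show ?case
  proof (cases "y < n")
    case False
    then show ?thesis using sc_le[of y z w n] sc_le[of y z' w' n] sc_self[of n z w] sc_self[of n z' w']
      by force
  next
    case True
    show ?thesis
    proof (cases "n \<le> 0")
      case True then show ?thesis
        by (subst (1 2) shortest_chain.simps) auto
    next
      case False
      have e: "z (nat n) = z' (nat n) \<and> w (nat n) = w' (nat n)"
        using 1(2)[of "nat n"] False True by auto
      show ?thesis
      proof (cases "min (z (nat n)) (w (nat n)) = 0")
        case True then show ?thesis using e by (subst (1 2) shortest_chain.simps) auto
      next
        case c: False
        have ih: "y \<in> shortest_chain z w (n - int (min (z (nat n)) (w (nat n)))) \<longleftrightarrow>
                  y \<in> shortest_chain z' w' (n - int (min (z (nat n)) (w (nat n))))"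
          using 1(1)[OF _ 1(2)] False c by auto
        show ?thesis using e c False ih
          by (subst (1 2) shortest_chain.simps) auto
      qed
    qed
  qed
qed

lemma sc_window:
  shows "(\<And>k. k \<ge> 1 \<Longrightarrow> z k \<ge> 1 \<and> w k \<ge> 1) \<Longrightarrow> 1 \<le> a \<Longrightarrow> a \<le> n \<Longrightarrow> \<exists>x\<in>shortest_chain z w n. a \<le> x \<and> x - int (min (z (nat x)) (w (nat x))) < a"
proof (induction z w n rule: shortest_chain.induct)
  case (1 z w n)
  have n0: "n > 0" using 1(3,4) by simp
  have m1: "min (z (nat n)) (w (nat n)) \<ge> 1" using 1(2)[of "nat n"] n0 by (simp add: Suc_le_eq)
  have eq: "shortest_chain z w n = insert n (shortest_chain z w (n - int (min (z (nat n)) (w (nat n)))))"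
    using n0 m1 by (subst shortest_chain.simps) auto
  show ?case
  proof (cases "n - int (min (z (nat n)) (w (nat n))) < a")
    case True then show ?thesis using 1(4) eq by auto
  next
    case False
    then obtain x where "x \<in> shortest_chain z w (n - int (min (z (nat n)) (w (nat n))))"
      "a \<le> x \<and> x - int (min (z (nat x)) (w (nat x))) < a"
      using 1(1)[OF _ 1(2) 1(3)] n0 m1 by force
    then show ?thesis using eq by auto
  qed
qed

lemma sets_PiE_nat:
  assumes "finite J"
  shows "{f \<in> PiE J (\<lambda>_. UNIV::nat set). P f} \<in> sets (PiM J (\<lambda>_. count_space UNIV))"
proof -
  let ?S = "{f \<in> PiE J (\<lambda>_. UNIV::nat set). P f}"
  have c: "countable ?S"
    by (rule countable_subset[OF _ countable_PiE[OF assms]]) auto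
  have "(\<Union>f\<in>?S. PiE J (\<lambda>i. {f i})) = (\<Union>f\<in>?S. {f})"
    by (intro SUP_cong refl PiE_singleton) (auto simp: PiE_iff)
  then have "?S = (\<Union>f\<in>?S. PiE J (\<lambda>i. {f i}))" by simp
  also have "\<dots> \<in> sets (PiM J (\<lambda>_. count_space UNIV))"
    by (rule sets.countable_UN''[OF c]) (auto intro!: sets_PiM_I_finite assms)
  finally show ?thesis .
qed

lemma indep_restrict_sets:
  fixes X :: "'i \<Rightarrow> 'a \<Rightarrow> nat"
  assumes "prob_space M" "prob_space.indep_vars M (\<lambda>_. count_space UNIV) X I" "J \<subseteq> I" "finite J"
  shows "{\<omega>\<in>space M. P (restrict (\<lambda>i. X i \<omega>) J)} \<in> sets M"
proof -
  interpret prob_space M by fact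
  have meas: "(\<lambda>\<omega>. restrict (\<lambda>i. X i \<omega>) J) \<in> measurable M (PiM J (\<lambda>_. count_space UNIV))"
    using assms(2,3) by (intro measurable_restrict) (auto simp: indep_vars_def)
  have "{\<omega>\<in>space M. P (restrict (\<lambda>i. X i \<omega>) J)} =
        (\<lambda>\<omega>. restrict (\<lambda>i. X i \<omega>) J) -` {f \<in> PiE J (\<lambda>_. UNIV). P f} \<inter> space M" by auto
  then show ?thesis using measurable_sets[OF meas sets_PiE_nat[OF assms(4)]] by simp
qed

lemma indep_restrict_prob:
  fixes X :: "'i \<Rightarrow> 'a \<Rightarrow> nat"
  assumes "prob_space M" "prob_space.indep_vars M (\<lambda>_. count_space UNIV) X I"
    "J1 \<subseteq> I" "J2 \<subseteq> I" "J1 \<inter> J2 = {}" "finite J1" "finite J2"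
  shows "measure M {\<omega>\<in>space M. P1 (restrict (\<lambda>i. X i \<omega>) J1) \<and> P2 (restrict (\<lambda>i. X i \<omega>) J2)}
       = measure M {\<omega>\<in>space M. P1 (restrict (\<lambda>i. X i \<omega>) J1)} * measure M {\<omega>\<in>space M. P2 (restrict (\<lambda>i. X i \<omega>) J2)}"
proof -
  interpret prob_space M by fact
  have iv: "indep_var (PiM J1 (\<lambda>_. count_space UNIV)) (\<lambda>\<omega>. restrict (\<lambda>i. X i \<omega>) J1)
                      (PiM J2 (\<lambda>_. count_space UNIV)) (\<lambda>\<omega>. restrict (\<lambda>i. X i \<omega>) J2)"
    by (rule indep_var_restrict[OF assms(2) assms(5,3,4)])
  have e: "prob ((\<lambda>x. (restrict (\<lambda>i. X i x) J1, restrict (\<lambda>i. X i x) J2)) -`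
      ({f \<in> PiE J1 (\<lambda>_. UNIV). P1 f} \<times> {f \<in> PiE J2 (\<lambda>_. UNIV). P2 f}) \<inter> space M)
    = prob ((\<lambda>x. restrict (\<lambda>i. X i x) J1) -` {f \<in> PiE J1 (\<lambda>_. UNIV). P1 f} \<inter> space M) *
      prob ((\<lambda>x. restrict (\<lambda>i. X i x) J2) -` {f \<in> PiE J2 (\<lambda>_. UNIV). P2 f} \<inter> space M)"
    by (rule indep_varD[OF iv sets_PiE_nat[OF assms(6)] sets_PiE_nat[OF assms(7)]])
  have s1: "(\<lambda>x. (restrict (\<lambda>i. X i x) J1, restrict (\<lambda>i. X i x) J2)) -`
      ({f \<in> PiE J1 (\<lambda>_. UNIV). P1 f} \<times> {f \<in> PiE J2 (\<lambda>_. UNIV). P2 f}) \<inter> space M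
      = {\<omega>\<in>space M. P1 (restrict (\<lambda>i. X i \<omega>) J1) \<and> P2 (restrict (\<lambda>i. X i \<omega>) J2)}" by auto
  have s2: "\<And>J P. (\<lambda>x. restrict (\<lambda>i. X i x) J) -` {f \<in> PiE J (\<lambda>_. UNIV). P f} \<inter> space M
      = {\<omega>\<in>space M. P (restrict (\<lambda>i. X i \<omega>) J)}" by auto
  show ?thesis using e unfolding s1 s2 .
qed

lemma indep_two_prob:
  fixes X :: "'i \<Rightarrow> 'a \<Rightarrow> nat"
  assumes "prob_space M" "prob_space.indep_vars M (\<lambda>_. count_space UNIV) X I"
    "i \<in> I" "j \<in> I" "i \<noteq> j"
  shows "measure M {\<omega>\<in>space M. Q1 (X i \<omega>) \<and> Q2 (X j \<omega>)}
       = measure M {\<omega>\<in>space M. Q1 (X i \<omega>)} * measure M {\<omega>\<in>space M. Q2 (X j \<omega>)}"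
  using indep_restrict_prob[OF assms(1,2), of "{i}" "{j}" "\<lambda>f. Q1 (f i)" "\<lambda>f. Q2 (f j)"] assms(3-5)
  by simp

lemma sets_pred_nat:
  assumes "f \<in> measurable M (count_space (UNIV::nat set))"
  shows "{\<omega>\<in>space M. Q (f \<omega>)} \<in> sets M"
proof -
  have "{\<omega>\<in>space M. Q (f \<omega>)} = f -` {x. Q x} \<inter> space M" by auto
  then show ?thesis using measurable_sets[OF assms, of "{x. Q x}"] by simp
qed

lemma ennreal_nat_suminf: "ennreal (real n) = (\<Sum>t. of_bool (Suc t \<le> n))"
proof -
  have "(\<Sum>t. (of_bool (Suc t \<le> n) :: ennreal)) = (\<Sum>t\<in>{..<n}. of_bool (Suc t \<le> n))"
    by (rule suminf_finite) auto
  also have "\<dots> = (\<Sum>t\<in>{..<n}. 1)" by (intro sum.cong) auto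
  finally show ?thesis by (simp add: ennreal_of_nat_eq_real_of_nat)
qed

lemma nn_integral_nat_tail:
  fixes f :: "'a \<Rightarrow> nat"
  assumes "\<And>t. {\<omega>\<in>space M. t \<le> f \<omega>} \<in> sets M"
  shows "(\<integral>\<^sup>+\<omega>. ennreal (real (f \<omega>)) \<partial>M) = (\<Sum>t. emeasure M {\<omega>\<in>space M. Suc t \<le> f \<omega>})"
proof -
  have "(\<integral>\<^sup>+\<omega>. ennreal (real (f \<omega>)) \<partial>M) = (\<integral>\<^sup>+\<omega>. (\<Sum>t. indicator {\<omega>\<in>space M. Suc t \<le> f \<omega>} \<omega>) \<partial>M)"
    by (intro nn_integral_cong) (simp add: ennreal_nat_suminf indicator_def)
  also have "\<dots> = (\<Sum>t. \<integral>\<^sup>+\<omega>. indicator {\<omega>\<in>space M. Suc t \<le> f \<omega>} \<omega> \<partial>M)"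
    by (intro nn_integral_suminf) (use assms in auto)
  also have "\<dots> = (\<Sum>t. emeasure M {\<omega>\<in>space M. Suc t \<le> f \<omega>})"
    by (intro suminf_cong nn_integral_indicator assms)
  finally show ?thesis .
qed

theorem mainTheorem9:
  fixes M :: "'a measure"
    and Z W :: "'a \<Rightarrow> nat"
    and Zs Ws :: "nat \<Rightarrow> 'a \<Rightarrow> nat"
  assumes "prob_space M"
    and indep: "prob_space.indep_vars M (\<lambda>_. count_space UNIV)
          (\<lambda>i. case i of None \<Rightarrow> Z | Some None \<Rightarrow> W
                 | Some (Some (True, n)) \<Rightarrow> Zs n | Some (Some (False, n)) \<Rightarrow> Ws n)
          ({None, Some None} \<union> Some ` Some ` (UNIV \<times> {1..}))"
    and distW: "distr M (count_space UNIV) W = distr M (count_space UNIV) Z"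
    and distZs: "\<And>n. n \<ge> 1 \<Longrightarrow> distr M (count_space UNIV) (Zs n) = distr M (count_space UNIV) Z"
    and distWs: "\<And>n. n \<ge> 1 \<Longrightarrow> distr M (count_space UNIV) (Ws n) = distr M (count_space UNIV) Z"
    and posZ: "\<And>\<omega>. \<omega> \<in> space M \<Longrightarrow> Z \<omega> \<ge> 1"
    and posW: "\<And>\<omega>. \<omega> \<in> space M \<Longrightarrow> W \<omega> \<ge> 1"
    and posZs: "\<And>n \<omega>. n \<ge> 1 \<Longrightarrow> \<omega> \<in> space M \<Longrightarrow> Zs n \<omega> \<ge> 1"
    and posWs: "\<And>n \<omega>. n \<ge> 1 \<Longrightarrow> \<omega> \<in> space M \<Longrightarrow> Ws n \<omega> \<ge> 1"
    and aperiodic: "Gcd {k. measure M {\<omega> \<in> space M. Z \<omega> = k} > 0} = 1"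
    and infinite_mean: "(\<integral>\<^sup>+ \<omega>. ennreal (real (Z \<omega>)) \<partial>M) = \<infinity>"
    and finite_min_mean: "(\<integral>\<^sup>+ \<omega>. ennreal (real (min (Z \<omega>) (W \<omega>))) \<partial>M) < \<infinity>"
  shows "filterlim
           (\<lambda>n. prob_space.expectation M
                  (\<lambda>\<omega>. real (J_count (\<lambda>m. Zs m \<omega>) (\<lambda>m. Ws m \<omega>) n)))
           at_top sequentially"
proof -
  interpret prob_space M by fact
  define X where "X = (\<lambda>i. case i of None \<Rightarrow> Z | Some None \<Rightarrow> W
                 | Some (Some (True, n)) \<Rightarrow> Zs n | Some (Some (False, n)) \<Rightarrow> Ws n)"
  define I :: "(bool \<times> nat) option option set" where "I = ({None, Some None} \<union> Some ` Some ` (UNIV \<times> {1..}))"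
  have ind: "indep_vars (\<lambda>_. count_space UNIV) X I" using indep unfolding X_def I_def .
  have XZ: "X None = Z" "X (Some None) = W" "\<And>k. X (Some (Some (True,k))) = Zs k"
    "\<And>k. X (Some (Some (False,k))) = Ws k" by (simp_all add: X_def)
  have measX: "\<And>i. i \<in> I \<Longrightarrow> X i \<in> measurable M (count_space UNIV)"
    using ind by (auto simp: indep_vars_def)
  have measZ: "Z \<in> measurable M (count_space UNIV)" using measX[of None] by (simp add: XZ I_def)
  have measW: "W \<in> measurable M (count_space UNIV)" using measX[of "Some None"] by (simp add: XZ I_def)
  have measZs: "Zs k \<in> measurable M (count_space UNIV)" if "k \<ge> 1" for k
    using measX[of "Some (Some (True, k))"] that by (simp add: XZ I_def)
  have measWs: "Ws k \<in> measurable M (count_space UNIV)" if "k \<ge> 1" for k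
    using measX[of "Some (Some (False, k))"] that by (simp add: XZ I_def)
  define r where "r t = prob {\<omega>\<in>space M. t \<le> Z \<omega>}" for t
  have distr_prob: "prob {\<omega>\<in>space M. t \<le> Y \<omega>} = r t"
    if "Y \<in> measurable M (count_space UNIV)" "distr M (count_space UNIV) Y = distr M (count_space UNIV) Z" for Y t
  proof -
    have "prob {\<omega>\<in>space M. t \<le> Y \<omega>} = measure (distr M (count_space UNIV) Y) {t..}"
      using that(1) by (subst measure_distr) (auto intro!: arg_cong[where f=prob])
    also have "\<dots> = measure (distr M (count_space UNIV) Z) {t..}" using that(2) by simp
    also have "\<dots> = r t" unfolding r_def
      using measZ by (subst measure_distr) (auto intro!: arg_cong[where f=prob])
    finally show ?thesis .
  qed
  have rZs: "\<And>k t. k \<ge> 1 \<Longrightarrow> prob {\<omega>\<in>space M. t \<le> Zs k \<omega>} = r t"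
    using distr_prob measZs distZs by blast
  have rWs: "\<And>k t. k \<ge> 1 \<Longrightarrow> prob {\<omega>\<in>space M. t \<le> Ws k \<omega>} = r t"
    using distr_prob measWs distWs by blast
  have rW: "\<And>t. prob {\<omega>\<in>space M. t \<le> W \<omega>} = r t"
    using distr_prob measW distW by blast
  have r_nonneg: "\<And>t. 0 \<le> r t" and r_le1: "\<And>t. r t \<le> 1" by (simp_all add: r_def)
  have r_mono: "r t' \<le> r t" if "t \<le> t'" for t t'
    unfolding r_def using that
    by (intro finite_measure_mono sets_pred_nat[OF measZ]) auto
  have not_summable: "\<not> summable r"
  proof
    assume "summable r"
    then have "summable (\<lambda>t. r (Suc t))" by (simp add: summable_Suc_iff)
    then have "(\<Sum>t. ennreal (r (Suc t))) \<noteq> top" using r_nonneg by (intro ennreal_suminf_neq_top) auto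
    moreover have "(\<integral>\<^sup>+ \<omega>. ennreal (real (Z \<omega>)) \<partial>M) = (\<Sum>t. ennreal (r (Suc t)))"
      by (subst nn_integral_nat_tail[OF sets_pred_nat[OF measZ]]) (simp add: r_def emeasure_eq_measure)
    ultimately show False using infinite_mean by simp
  qed
  have diverge: "\<exists>K. B \<le> (\<Sum>t<K. r t)" for B
  proof (rule ccontr)
    assume "\<not> ?thesis"
    then have "\<forall>K. (\<Sum>t<K. r t) < B" by (simp add: not_le)
    then have "\<And>K. (\<Sum>t<K. r t) \<le> B" by (simp add: less_imp_le)
    then have "summable r" using r_nonneg by (intro summableI_nonneg_bounded) auto
    then show False using not_summable by simp
  qed
  define s where "s t = r t * r t" for t
  have s_nonneg: "\<And>t. 0 \<le> s t" by (simp add: s_def r_nonneg)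
  have summable_s: "summable s"
  proof -
    have "(\<integral>\<^sup>+ \<omega>. ennreal (real (min (Z \<omega>) (W \<omega>))) \<partial>M) = (\<Sum>t. ennreal (s (Suc t)))"
    proof (subst nn_integral_nat_tail)
      show "{\<omega> \<in> space M. t \<le> min (Z \<omega>) (W \<omega>)} \<in> sets M" for t
      proof -
        have "{\<omega> \<in> space M. t \<le> min (Z \<omega>) (W \<omega>)} = {\<omega> \<in> space M. t \<le> Z \<omega>} \<inter> {\<omega> \<in> space M. t \<le> W \<omega>}" by auto
        then show ?thesis using sets.Int[OF sets_pred_nat[OF measZ, of "\<lambda>x. t \<le> x"] sets_pred_nat[OF measW, of "\<lambda>x. t \<le> x"]] by simp
      qed
      have "prob {\<omega> \<in> space M. Suc t \<le> min (Z \<omega>) (W \<omega>)} = s (Suc t)" for t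
      proof -
        have e1: "{\<omega> \<in> space M. Suc t \<le> min (Z \<omega>) (W \<omega>)} =
              {\<omega> \<in> space M. Suc t \<le> X None \<omega> \<and> Suc t \<le> X (Some None) \<omega>}"
          unfolding XZ by auto
        have e2: "prob {\<omega> \<in> space M. Suc t \<le> X None \<omega> \<and> Suc t \<le> X (Some None) \<omega>}
           = prob {\<omega> \<in> space M. Suc t \<le> X None \<omega>} * prob {\<omega> \<in> space M. Suc t \<le> X (Some None) \<omega>}"
          by (rule indep_two_prob[OF \<open>prob_space M\<close> ind]) (simp_all add: I_def)
        have e3: "prob {\<omega> \<in> space M. Suc t \<le> X None \<omega>} = r (Suc t)"
          unfolding XZ r_def ..
        have e4: "prob {\<omega> \<in> space M. Suc t \<le> X (Some None) \<omega>} = r (Suc t)"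
          unfolding XZ by (rule rW)
        show ?thesis unfolding e1 e2 e3 e4 s_def ..
      qed
      then show "(\<Sum>t. emeasure M {\<omega> \<in> space M. Suc t \<le> min (Z \<omega>) (W \<omega>)}) = (\<Sum>t. ennreal (s (Suc t)))"
        by (simp add: emeasure_eq_measure)
    qed
    then have "(\<Sum>t. ennreal (s (Suc t))) \<noteq> top" using finite_min_mean by simp
    then have "summable (\<lambda>t. s (Suc t))" using s_nonneg by (intro summable_suminf_not_top) auto
    then show ?thesis by (simp add: summable_Suc_iff)
  qed
  obtain L :: nat where L1: "L \<ge> 1" and Ltail: "\<And>N. (\<Sum>t\<in>{L+1..<N}. s t) \<le> 1/2"
  proof -
    have "(\<lambda>n. \<Sum>t<n. s t) \<longlonglongrightarrow> suminf s" using summable_s by (rule summable_LIMSEQ)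
    then have "eventually (\<lambda>n. suminf s - 1/2 < (\<Sum>t<n. s t)) sequentially"
      by (rule order_tendstoD(1)) simp
    then obtain n0 where n0: "\<And>n. n \<ge> n0 \<Longrightarrow> suminf s - 1/2 < (\<Sum>t<n. s t)"
      by (auto simp: eventually_sequentially)
    show ?thesis
    proof (rule that[of "n0 + 1"])
      show "1 \<le> n0 + 1" by simp
      fix N
      have "(\<Sum>t\<in>{n0+1+1..<N}. s t) + (\<Sum>t<n0+1+1. s t) = (\<Sum>t\<in>{..<n0+1+1} \<union> {n0+1+1..<N}. s t)"
        by (subst sum.union_disjoint) auto
      also have "\<dots> \<le> suminf s"
        using summable_s s_nonneg by (intro sum_le_suminf) auto
      finally show "(\<Sum>t\<in>{n0+1+1..<N}. s t) \<le> 1/2" using n0[of "n0+1+1"] by simp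
    qed
  qed
  define A where "A n m = {\<omega>\<in>space M. int m \<in> shortest_chain (\<lambda>k. Zs k \<omega>) (\<lambda>k. Ws k \<omega>) (int n)}" for n m :: nat
  define Jb :: "nat \<Rightarrow> nat \<Rightarrow> (bool \<times> nat) option option set"
    where "Jb m n = Some ` Some ` (UNIV \<times> {m<..n})" for m n
  define PA where "PA m n f = (int m \<in> shortest_chain (\<lambda>k. f (Some (Some (True,k)))) (\<lambda>k. f (Some (Some (False,k)))) (int n))"
    for m n :: nat and f :: "(bool \<times> nat) option option \<Rightarrow> nat"
  have Im: "Some (Some (b, k)) \<in> I" if "k \<ge> 1" for b k
    using that unfolding I_def by (intro UnI2 imageI) simp
  have Jb_sub: "Jb m n \<subseteq> I" for m n by (auto simp: Jb_def I_def)
  have Jb_fin: "finite (Jb m n)" for m n by (simp add: Jb_def)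
  have A_eq: "A n m = {\<omega>\<in>space M. PA m n (restrict (\<lambda>i. X i \<omega>) (Jb m n))}" for n m
  proof -
    have "(int m \<in> shortest_chain (\<lambda>k. Zs k \<omega>) (\<lambda>k. Ws k \<omega>) (int n)) \<longleftrightarrow> PA m n (restrict (\<lambda>i. X i \<omega>) (Jb m n))" for \<omega>
      unfolding PA_def by (rule sc_local) (auto simp: Jb_def XZ)
    then show ?thesis by (auto simp: A_def)
  qed
  have A_sets: "A n m \<in> sets M" for n m
    unfolding A_eq by (rule indep_restrict_sets[OF \<open>prob_space M\<close> ind Jb_sub Jb_fin])
  have A_indep: "prob (A n m \<inter> {\<omega>\<in>space M. m \<le> Zs m \<omega>}) = prob (A n m) * r m" if "m \<ge> 1" for n m
  proof -
    have "A n m \<inter> {\<omega>\<in>space M. m \<le> Zs m \<omega>} = {\<omega>\<in>space M. PA m n (restrict (\<lambda>i. X i \<omega>) (Jb m n)) \<and>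
              (\<lambda>f. m \<le> f (Some (Some (True,m)))) (restrict (\<lambda>i. X i \<omega>) {Some (Some (True,m))})}"
      unfolding A_eq by (auto simp: XZ)
    also have "prob \<dots> = prob {\<omega>\<in>space M. PA m n (restrict (\<lambda>i. X i \<omega>) (Jb m n))} *
        prob {\<omega>\<in>space M. (\<lambda>f. m \<le> f (Some (Some (True,m)))) (restrict (\<lambda>i. X i \<omega>) {Some (Some (True,m))})}"
      by (rule indep_restrict_prob[OF \<open>prob_space M\<close> ind Jb_sub]) (use Im[OF that] in \<open>auto simp: Jb_def\<close>)
    also have "prob {\<omega>\<in>space M. (\<lambda>f. m \<le> f (Some (Some (True,m)))) (restrict (\<lambda>i. X i \<omega>) {Some (Some (True,m))})} = r m"
      using rZs[OF that] by (simp add: XZ)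
    finally show ?thesis by (simp only: A_eq)
  qed
  have window: "1/2 \<le> (\<Sum>m\<in>{a..<a+L}. prob (A n m))" if a1: "1 \<le> a" and aL: "a + L \<le> n + 1" for a n
  proof -
    define D where "D k = {\<omega>\<in>space M. k + 1 - a \<le> Zs k \<omega> \<and> k + 1 - a \<le> Ws k \<omega>}" for k
    have D_eq: "D k = {\<omega>\<in>space M. k + 1 - a \<le> X (Some (Some (True, k))) \<omega> \<and> k + 1 - a \<le> X (Some (Some (False, k))) \<omega>}" for k
      unfolding D_def XZ ..
    have D_prob: "prob (D k) = s (k + 1 - a)" if "k \<ge> 1" for k
    proof -
      have "prob (D k) = prob {\<omega>\<in>space M. k + 1 - a \<le> X (Some (Some (True, k))) \<omega>} *
                         prob {\<omega>\<in>space M. k + 1 - a \<le> X (Some (Some (False, k))) \<omega>}"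
        unfolding D_eq by (rule indep_two_prob[OF \<open>prob_space M\<close> ind Im[OF that] Im[OF that]]) simp
      then show ?thesis using rZs[OF that] rWs[OF that] by (simp add: XZ s_def)
    qed
    have D_sets: "D k \<in> sets M" if "k \<ge> 1" for k
    proof -
      have "D k = {\<omega>\<in>space M. k + 1 - a \<le> Zs k \<omega>} \<inter> {\<omega>\<in>space M. k + 1 - a \<le> Ws k \<omega>}"
        unfolding D_def by blast
      then show ?thesis using sets.Int[OF sets_pred_nat[OF measZs[OF that], of "\<lambda>x. k + 1 - a \<le> x"]
         sets_pred_nat[OF measWs[OF that], of "\<lambda>x. k + 1 - a \<le> x"]] by simp
    qed
    have cover: "space M \<subseteq> (\<Union>m\<in>{a..<a+L}. A n m) \<union> (\<Union>k\<in>{a+L..n}. D k)"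
    proof
      fix \<omega> assume \<omega>: "\<omega> \<in> space M"
      have pos: "\<And>k. k \<ge> 1 \<Longrightarrow> Zs k \<omega> \<ge> 1 \<and> Ws k \<omega> \<ge> 1" using posZs posWs \<omega> by auto
      have "1 \<le> int a" "int a \<le> int n" using a1 aL L1 by auto
      from sc_window[of "\<lambda>k. Zs k \<omega>" "\<lambda>k. Ws k \<omega>", OF pos this]
      obtain x where x: "x \<in> shortest_chain (\<lambda>k. Zs k \<omega>) (\<lambda>k. Ws k \<omega>) (int n)" "int a \<le> x"
          "x - int (min (Zs (nat x) \<omega>) (Ws (nat x) \<omega>)) < int a" by blast
      define k where "k = nat x"
      have xk: "x = int k" using x(2) a1 k_def by auto
      have kn: "k \<le> n" using sc_le[OF x(1)] xk by simp
      have ak: "a \<le> k" using x(2) xk by simp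
      show "\<omega> \<in> (\<Union>m\<in>{a..<a+L}. A n m) \<union> (\<Union>k\<in>{a+L..n}. D k)"
      proof (cases "k < a + L")
        case True
        then have "\<omega> \<in> A n k" using x(1) xk \<omega> by (simp add: A_def)
        then show ?thesis using True ak by auto
      next
        case False
        have "k + 1 - a \<le> min (Zs k \<omega>) (Ws k \<omega>)" using x(3) xk ak by (simp add: min_def split: if_splits)
        then have "\<omega> \<in> D k" using \<omega> by (simp add: D_def)
        then show ?thesis using False kn by auto
      qed
    qed
    have Dpos: "k \<in> {a+L..n} \<Longrightarrow> k \<ge> 1" for k using a1 by auto
    have UA: "(\<Union>m\<in>{a..<a+L}. A n m) \<in> sets M" using A_sets by auto
    have UD: "(\<Union>k\<in>{a+L..n}. D k) \<in> sets M" using D_sets Dpos by auto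
    have "(\<Sum>k\<in>{a+L..n}. prob (D k)) = (\<Sum>k\<in>{a+L..n}. s (k + 1 - a))"
      using D_prob Dpos by (intro sum.cong) auto
    also have "\<dots> = (\<Sum>t\<in>(\<lambda>k. k + 1 - a) ` {a+L..n}. s t)"
      by (rule sum.reindex[symmetric, unfolded comp_def]) (auto simp: inj_on_def)
    also have "\<dots> \<le> (\<Sum>t\<in>{L+1..<n+2}. s t)"
      using s_nonneg by (intro sum_mono2) auto
    also have "\<dots> \<le> 1/2" by (rule Ltail)
    finally have Dsum: "(\<Sum>k\<in>{a+L..n}. prob (D k)) \<le> 1/2" .
    have "1 = prob (space M)" by (simp add: prob_space)
    also have "\<dots> \<le> prob ((\<Union>m\<in>{a..<a+L}. A n m) \<union> (\<Union>k\<in>{a+L..n}. D k))"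
      using cover UA UD by (intro finite_measure_mono) auto
    also have "\<dots> \<le> prob (\<Union>m\<in>{a..<a+L}. A n m) + prob (\<Union>k\<in>{a+L..n}. D k)"
      using UA UD by (rule measure_Un_le)
    also have "\<dots> \<le> (\<Sum>m\<in>{a..<a+L}. prob (A n m)) + (\<Sum>k\<in>{a+L..n}. prob (D k))"
      using A_sets D_sets Dpos by (intro add_mono measure_UNION_le) auto
    finally show ?thesis using Dsum by linarith
  qed
  have block: "(\<Sum>j<K. r ((j+1)*L)) / 2 \<le> (\<Sum>m\<in>{1..<K*L+1}. prob (A n m) * r m)" if "K*L \<le> n" for K n
    using that
  proof (induction K)
    case 0 then show ?case by simp
  next
    case (Suc K)
    have KL: "K*L \<le> n" using Suc.prems by simp
    have b2: "r ((K+1)*L) / 2 \<le> (\<Sum>m\<in>{K*L+1..<K*L+1+L}. prob (A n m) * r m)"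
    proof -
      have "r ((K+1)*L) / 2 \<le> r ((K+1)*L) * (\<Sum>m\<in>{K*L+1..<K*L+1+L}. prob (A n m))"
      proof -
        have w: "1/2 \<le> (\<Sum>m\<in>{K*L+1..<K*L+1+L}. prob (A n m))"
          using Suc.prems by (intro window) auto
        have "r ((K+1)*L) * (1/2) \<le> r ((K+1)*L) * (\<Sum>m\<in>{K*L+1..<K*L+1+L}. prob (A n m))"
          by (rule mult_left_mono[OF w r_nonneg])
        then show ?thesis by simp
      qed
      also have "\<dots> = (\<Sum>m\<in>{K*L+1..<K*L+1+L}. r ((K+1)*L) * prob (A n m))"
        by (rule sum_distrib_left)
      also have "\<dots> \<le> (\<Sum>m\<in>{K*L+1..<K*L+1+L}. prob (A n m) * r m)"
      proof (intro sum_mono)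
        fix m assume "m \<in> {K*L+1..<K*L+1+L}"
        then have "r ((K+1)*L) \<le> r m" by (intro r_mono) auto
        then show "r ((K+1)*L) * prob (A n m) \<le> prob (A n m) * r m"
          by (metis measure_nonneg mult.commute mult_left_mono)
      qed
      finally show ?thesis .
    qed
    have "(\<Sum>m\<in>{1..<Suc K*L+1}. prob (A n m) * r m) =
          (\<Sum>m\<in>{1..<K*L+1}. prob (A n m) * r m) + (\<Sum>m\<in>{K*L+1..<K*L+1+L}. prob (A n m) * r m)"
      by (subst sum.atLeastLessThan_concat) (auto simp: algebra_simps)
    moreover have "(\<Sum>j<Suc K. r ((j+1)*L)) / 2 = (\<Sum>j<K. r ((j+1)*L)) / 2 + r ((K+1)*L) / 2"
      by (simp add: add_divide_distrib)
    ultimately show ?case using Suc.IH[OF KL] b2 by linarith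
  qed
  have series: "(\<Sum>t<(K+1)*L. r t) - L \<le> L * (\<Sum>j<K. r ((j+1)*L))" for K
  proof (induction K)
    case 0
    have "(\<Sum>t<L. r t) \<le> of_nat (card {..<L}) * 1" by (rule sum_bounded_above) (rule r_le1)
    then show ?case by simp
  next
    case (Suc K)
    have "(\<Sum>t\<in>{(K+1)*L..<(K+1)*L+L}. r t) \<le> of_nat (card {(K+1)*L..<(K+1)*L+L}) * r ((K+1)*L)"
      by (rule sum_bounded_above) (auto intro: r_mono)
    then have h: "(\<Sum>t\<in>{(K+1)*L..<(K+1)*L+L}. r t) \<le> L * r ((K+1)*L)" by simp
    have "(\<Sum>t<(Suc K+1)*L. r t) = (\<Sum>t<(K+1)*L. r t) + (\<Sum>t\<in>{(K+1)*L..<(K+1)*L+L}. r t)"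
      unfolding lessThan_atLeast0 by (subst sum.atLeastLessThan_concat) (auto simp: algebra_simps)
    moreover have "L * (\<Sum>j<Suc K. r ((j+1)*L)) = L * (\<Sum>j<K. r ((j+1)*L)) + L * r ((K+1)*L)"
      by (simp add: algebra_simps)
    ultimately show ?case using Suc.IH h by linarith
  qed
  define B where "B m = {\<omega>\<in>space M. m \<le> max (Zs m \<omega>) (Ws m \<omega>)}" for m
  have B_sets: "B m \<in> sets M" if "m \<ge> 1" for m
  proof -
    have "B m = {\<omega>\<in>space M. m \<le> Zs m \<omega>} \<union> {\<omega>\<in>space M. m \<le> Ws m \<omega>}"
      unfolding B_def by auto
    then show ?thesis using sets.Un[OF sets_pred_nat[OF measZs[OF that], of "\<lambda>x. m \<le> x"]
         sets_pred_nat[OF measWs[OF that], of "\<lambda>x. m \<le> x"]] by simp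
  qed
  have EJ: "expectation (\<lambda>\<omega>. real (J_count (\<lambda>m. Zs m \<omega>) (\<lambda>m. Ws m \<omega>) n)) = (\<Sum>m\<in>{1..n}. prob (A n m \<inter> B m))" for n
  proof -
    have "expectation (\<lambda>\<omega>. real (J_count (\<lambda>m. Zs m \<omega>) (\<lambda>m. Ws m \<omega>) n))
        = expectation (\<lambda>\<omega>. \<Sum>m\<in>{1..n}. indicator (A n m \<inter> B m) \<omega>)"
      by (intro Bochner_Integration.integral_cong refl, simp only: J_count_def of_nat_sum, intro sum.cong refl) (auto simp: A_def B_def indicator_def)
    also have "\<dots> = (\<Sum>m\<in>{1..n}. expectation (indicator (A n m \<inter> B m)))"
      using A_sets B_sets by (intro Bochner_Integration.integral_sum) (auto simp: integrable_indicator_iff less_top[symmetric])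
    also have "\<dots> = (\<Sum>m\<in>{1..n}. prob (A n m \<inter> B m))"
      using A_sets B_sets by (intro sum.cong refl) (auto simp: Int_absorb2 sets.sets_into_space)
    finally show ?thesis .
  qed
  have lower: "(\<Sum>j<n div L. r ((j+1)*L)) / 2 \<le> expectation (\<lambda>\<omega>. real (J_count (\<lambda>m. Zs m \<omega>) (\<lambda>m. Ws m \<omega>) n))" for n
  proof -
    have "(\<Sum>j<n div L. r ((j+1)*L)) / 2 \<le> (\<Sum>m\<in>{1..<(n div L)*L+1}. prob (A n m) * r m)"
      by (rule block) (simp add: div_times_less_eq_dividend)
    also have "\<dots> \<le> (\<Sum>m\<in>{1..n}. prob (A n m) * r m)"
    proof (rule sum_mono2)
      show "{1..<(n div L)*L+1} \<subseteq> {1..n}"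
      proof
        fix x assume x: "x \<in> {1..<(n div L)*L+1}"
        then have "x \<le> (n div L)*L" by simp
        then have "x \<le> n" using div_times_less_eq_dividend[of n L] by (rule order_trans)
        then show "x \<in> {1..n}" using x by simp
      qed
    qed (use r_nonneg in auto)
    also have "\<dots> \<le> (\<Sum>m\<in>{1..n}. prob (A n m \<inter> B m))"
    proof (intro sum_mono)
      fix m assume m: "m \<in> {1..n}"
      then have "prob (A n m) * r m = prob (A n m \<inter> {\<omega>\<in>space M. m \<le> Zs m \<omega>})" using A_indep by simp
      also have "\<dots> \<le> prob (A n m \<inter> B m)"
        using m A_sets B_sets by (intro finite_measure_mono) (auto simp: B_def)
      finally show "prob (A n m) * r m \<le> prob (A n m \<inter> B m)" .
    qed
    finally show ?thesis using EJ by simp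
  qed
  show ?thesis
    unfolding filterlim_at_top
  proof
    fix c :: real
    obtain K0 where K0: "2 * L * c + L \<le> (\<Sum>t<K0. r t)" using diverge by blast
    show "eventually (\<lambda>n. c \<le> expectation (\<lambda>\<omega>. real (J_count (\<lambda>m. Zs m \<omega>) (\<lambda>m. Ws m \<omega>) n))) sequentially"
      unfolding eventually_sequentially
    proof (intro exI allI impI)
      fix n assume n: "K0 * L \<le> n"
      define K where "K = n div L"
      have "K0 * L div L \<le> n div L" using n by (rule div_le_mono)
      then have KK0: "K0 \<le> K" using L1 unfolding K_def by simp
      have "(\<Sum>t<K0. r t) \<le> (\<Sum>t<(K+1)*L. r t)"
      proof (rule sum_mono2)
        have "(K+1)*1 \<le> (K+1)*L" using L1 by (rule mult_le_mono2)
        then show "{..<K0} \<subseteq> {..<(K+1)*L}" using KK0 by auto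
      qed (use r_nonneg in auto)
      then have "2 * L * c \<le> L * (\<Sum>j<K. r ((j+1)*L))" using series[of K] K0 by linarith
      then have "real L * (2 * c) \<le> real L * (\<Sum>j<K. r ((j+1)*L))" by (simp add: algebra_simps)
      then have "2 * c \<le> (\<Sum>j<K. r ((j+1)*L))" using L1 by (subst (asm) mult_le_cancel_left_pos) auto
      then have "c \<le> (\<Sum>j<K. r ((j+1)*L)) / 2" by simp
      then show "c \<le> expectation (\<lambda>\<omega>. real (J_count (\<lambda>m. Zs m \<omega>) (\<lambda>m. Ws m \<omega>) n))"
        using lower[of n] unfolding K_def by linarith
    qed
  qed
qed

end
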